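(* Let $\mathbf{k}$ be a field, $p\ge3$ an integer, and let $\varphi:\mathbf{k}[e_1,\dots,e_{2p}]\to\mathbf{k}[u_1,\dots,u_p,\alpha]$ be the $\mathbf{k}$-algebra homomorphism with $\varphi(e_i)=u_i$ for $1\le i\le p-1$, $\varphi(e_p)=u_p+\alpha$, $\varphi(e_i)=u_{i-p}\alpha$ for $p+1\le i\le 2p$, and $\mathcal{A}=\operatorname{Im}(\varphi)$. Grade $\mathbf{k}[u_1,\dots,u_p,\alpha]$ by $\mathbb{Z}^p$ with $\deg(u_i)=\epsilon_i$ and $\deg(\alpha)=\epsilon_p$, and fix any monomial order on $\mathbf{k}[u_1,\dots,u_p,\alpha]$ in which $\alpha\prec u_p$. Then for $\underline{d}=(d_1,\dots,d_p)\in\mathbb{Z}_{\ge0}^p$, $$\dim_{\mathbf{k}}(\mathrm{in}(\mathcal{A}))_{\underline{d}}=\begin{cases} d_p+1 & \text{if } d_i>0 \text{ for some } 1\le i\le p-1,\\ 1+\lfloor d_p/2\rfloor & \text{if } d_i=0 \text{ for all } 1\le i\le p-1.\end{cases}$$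
   Context: $\epsilon_i$ denotes the $i$-th standard basis vector of $\mathbb{Z}^p$. The initial algebra $\mathrm{in}(\mathcal{A})$ is the $\mathbf{k}$-span of the leading monomials of the nonzero elements of $\mathcal{A}$; $(\mathrm{in}(\mathcal{A}))_{\underline d}$ is its span of monomials of multidegree $\underline d$. *)

theory Defs
  imports Main "HOL.Vector_Spaces" "HOL-Library.Poly_Mapping"
begin

(* In k[u_1,...,u_p,alpha]
  the variable u_i is variable number i (1 <= i <= p) and alpha is variable number 0.
  In k[e_1,...,e_2p] the variable e_i is variable number i. *)

type_synonym 'k mpoly = "(nat \<Rightarrow>\<^sub>0 nat) \<Rightarrow>\<^sub>0 'k"

definition Var :: "nat \<Rightarrow> 'k::comm_ring_1 mpoly" where
  "Var v = Poly_Mapping.single (Poly_Mapping.single v 1) 1"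

definition Const :: "'k::comm_ring_1 \<Rightarrow> 'k mpoly" where
  "Const c = Poly_Mapping.single 0 c"

definition scale :: "'k::field \<Rightarrow> 'k mpoly \<Rightarrow> 'k mpoly" where
  "scale c f = Const c * f"

definition polys_in :: "nat set \<Rightarrow> 'k::comm_ring_1 mpoly set" where
  "polys_in V = {f::'k mpoly. \<forall>m\<in>Poly_Mapping.keys f. Poly_Mapping.keys m \<subseteq> V}"

definition subst :: "(nat \<Rightarrow> 'k::comm_ring_1 mpoly) \<Rightarrow> 'k mpoly \<Rightarrow> 'k mpoly" where
  "subst g f = (\<Sum>m\<in>Poly_Mapping.keys f. Const (Poly_Mapping.lookup f m) * (\<Prod>v\<in>Poly_Mapping.keys m. g v ^ Poly_Mapping.lookup m v))"

definition phi_gen :: "nat \<Rightarrow> nat \<Rightarrow> 'k::comm_ring_1 mpoly" where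
  "phi_gen p i =
     (if 1 \<le> i \<and> i \<le> p - 1 then Var i
      else if i = p then Var p + Var 0
      else if p + 1 \<le> i \<and> i \<le> 2 * p then Var (i - p) * Var 0
      else 0)"

definition algA :: "nat \<Rightarrow> 'k::comm_ring_1 mpoly set" where
  "algA p = subst (phi_gen p) ` polys_in {1..2*p}"

definition monomial_order :: "nat set \<Rightarrow> ((nat \<Rightarrow>\<^sub>0 nat) \<Rightarrow> (nat \<Rightarrow>\<^sub>0 nat) \<Rightarrow> bool) \<Rightarrow> bool" where
  "monomial_order V le \<longleftrightarrow>
     (let M = {m. Poly_Mapping.keys m \<subseteq> V} in
       (\<forall>a\<in>M. le a a) \<and>
       (\<forall>a\<in>M. \<forall>b\<in>M. le a b \<and> le b a \<longrightarrow> a = b) \<and>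
       (\<forall>a\<in>M. \<forall>b\<in>M. \<forall>c\<in>M. le a b \<and> le b c \<longrightarrow> le a c) \<and>
       (\<forall>a\<in>M. \<forall>b\<in>M. le a b \<or> le b a) \<and>
       (\<forall>a\<in>M. \<forall>b\<in>M. \<forall>c\<in>M. le a b \<longrightarrow> le (a + c) (b + c)) \<and>
       (\<forall>S\<subseteq>M. S \<noteq> {} \<longrightarrow> (\<exists>x\<in>S. \<forall>y\<in>S. le x y)))"

definition lead_mon :: "((nat \<Rightarrow>\<^sub>0 nat) \<Rightarrow> (nat \<Rightarrow>\<^sub>0 nat) \<Rightarrow> bool) \<Rightarrow> 'k::zero mpoly \<Rightarrow> (nat \<Rightarrow>\<^sub>0 nat)" where
  "lead_mon le f = (THE m. m \<in> Poly_Mapping.keys f \<and> (\<forall>m'\<in>Poly_Mapping.keys f. le m' m))"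

definition init_mons :: "((nat \<Rightarrow>\<^sub>0 nat) \<Rightarrow> (nat \<Rightarrow>\<^sub>0 nat) \<Rightarrow> bool) \<Rightarrow> 'k::zero mpoly set \<Rightarrow> (nat \<Rightarrow>\<^sub>0 nat) set" where
  "init_mons le A = {lead_mon le f | f. f \<in> A \<and> f \<noteq> 0}"

text \<open>Z^p-multidegree: deg u_i = eps_i, deg alpha = eps_p (components indexed 1..p)\<close>
definition mdeg :: "nat \<Rightarrow> (nat \<Rightarrow>\<^sub>0 nat) \<Rightarrow> nat \<Rightarrow> nat" where
  "mdeg p m i = (if i = p then Poly_Mapping.lookup m p + Poly_Mapping.lookup m 0 else Poly_Mapping.lookup m i)"

text \<open>monomials spanning (in(A))_d\<close>
definition init_part_mons ::
  "((nat \<Rightarrow>\<^sub>0 nat) \<Rightarrow> (nat \<Rightarrow>\<^sub>0 nat) \<Rightarrow> bool) \<Rightarrow> 'k::comm_ring_1 mpoly set \<Rightarrow> nat \<Rightarrow> (nat \<Rightarrow> nat) \<Rightarrow> 'k mpoly set" where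
  "init_part_mons le A p d =
     {Poly_Mapping.single m 1 | m. m \<in> init_mons le A \<and> Poly_Mapping.keys m \<subseteq> {0..p} \<and> (\<forall>i\<in>{1..p}. mdeg p m i = d i)}"

end

theory Submission
  imports Defs
begin


abbreviation "kys \<equiv> Poly_Mapping.keys"
abbreviation "lkp \<equiv> Poly_Mapping.lookup"
abbreviation "sng \<equiv> Poly_Mapping.single"

lemma Const_add: "Const (a + b) = Const a + (Const b :: 'k::comm_ring_1 mpoly)"
  by (simp add: Const_def single_add)
lemma Const_mult: "Const (a * b) = Const a * (Const b :: 'k::comm_ring_1 mpoly)"
  by (simp add: Const_def mult_single)
lemma Const_one: "Const 1 = (1 :: 'k::comm_ring_1 mpoly)"
  by (rule poly_mapping_eqI) (simp add: Const_def lookup_one lookup_single when_def)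
lemma Const_zero: "Const 0 = (0 :: 'k::comm_ring_1 mpoly)"
  by (simp add: Const_def)
lemma lookup_Const_mult: "lkp (Const c * f) k = c * lkp (f :: 'k::comm_ring_1 mpoly) k"
  by (simp add: Const_def mult_map_scale_conv_mult[symmetric] Poly_Mapping.map.rep_eq when_def)

lemma vs_scale: "vector_space (scale :: 'k::field \<Rightarrow> 'k mpoly \<Rightarrow> 'k mpoly)"
  by unfold_locales (simp_all add: scale_def Const_add Const_mult Const_one algebra_simps)

lemma expansion_superset:
  fixes f :: "'a \<Rightarrow>\<^sub>0 'b::comm_monoid_add"
  assumes "finite K" "kys f \<subseteq> K"
  shows "f = (\<Sum>m\<in>K. sng m (lkp f m))"
proof (rule poly_mapping_eqI)
  fix k
  have "lkp (\<Sum>m\<in>K. sng m (lkp f m)) k = (\<Sum>m\<in>K. if m = k then lkp f m else 0)"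
    by (simp add: lookup_sum lookup_single when_def eq_commute)
  also have "\<dots> = lkp f k" using assms by (auto simp: in_keys_iff)
  finally show "lkp f k = lkp (\<Sum>m\<in>K. sng m (lkp f m)) k" by simp
qed

definition mon :: "(nat \<Rightarrow> 'k::comm_ring_1 mpoly) \<Rightarrow> (nat \<Rightarrow>\<^sub>0 nat) \<Rightarrow> 'k mpoly" where
  "mon g n = (\<Prod>v\<in>kys n. g v ^ lkp n v)"

lemma mon_superset: "finite K \<Longrightarrow> kys n \<subseteq> K \<Longrightarrow> mon g n = (\<Prod>v\<in>K. g v ^ lkp n v)"
  unfolding mon_def by (rule prod.mono_neutral_left) (auto simp: in_keys_iff)

lemma mon_add: "mon g (a + b) = mon g a * mon g b"
proof -
  let ?K = "kys a \<union> kys b"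
  have "mon g (a+b) = (\<Prod>v\<in>?K. g v ^ lkp (a+b) v)"
    by (rule mon_superset) (auto dest: subsetD[OF keys_add])
  also have "\<dots> = (\<Prod>v\<in>?K. g v ^ lkp a v) * (\<Prod>v\<in>?K. g v ^ lkp b v)"
    by (simp add: lookup_add power_add prod.distrib)
  also have "\<dots> = mon g a * mon g b"
    by (simp add: mon_superset[symmetric])
  finally show ?thesis .
qed

lemma mon_zero [simp]: "mon g 0 = 1" by (simp add: mon_def)

lemma subst_superset:
  assumes "finite K" "kys f \<subseteq> K"
  shows "subst g f = (\<Sum>m\<in>K. Const (lkp f m) * mon g m)"
  unfolding subst_def mon_def[symmetric]
  by (rule sum.mono_neutral_left) (use assms in \<open>auto simp: in_keys_iff Const_zero\<close>)

lemma subst_add: "subst g (f1 + f2) = subst g f1 + subst g f2"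
proof -
  let ?K = "kys f1 \<union> kys f2"
  have "subst g (f1+f2) = (\<Sum>m\<in>?K. Const (lkp (f1+f2) m) * mon g m)"
    by (rule subst_superset) (auto dest: subsetD[OF keys_add])
  also have "\<dots> = (\<Sum>m\<in>?K. Const (lkp f1 m) * mon g m) + (\<Sum>m\<in>?K. Const (lkp f2 m) * mon g m)"
    by (simp add: lookup_add Const_add distrib_right sum.distrib)
  also have "\<dots> = subst g f1 + subst g f2"
    by (simp add: subst_superset[symmetric])
  finally show ?thesis .
qed

lemma subst_zero [simp]: "subst g 0 = 0" by (simp add: subst_def)

lemma subst_sum: "finite I \<Longrightarrow> subst g (\<Sum>i\<in>I. F i) = (\<Sum>i\<in>I. subst g (F i))"
  by (induction I rule: finite_induct) (simp_all add: subst_add)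

lemma subst_single: "subst g (sng n c) = Const c * mon g n"
  by (subst subst_superset[of "{n}"]) auto

lemma subst_uminus: "subst g (- f) = - subst g f"
  using subst_add[of g f "-f"] by (simp add: eq_neg_iff_add_eq_0 add.commute)

lemma subst_diff: "subst g (f1 - f2) = subst g f1 - subst g f2"
  using subst_add[of g f1 "-f2"] subst_uminus[of g f2] by simp

lemma subst_mult: "subst g (f1 * f2) = subst g f1 * subst g f2"
proof -
  let ?K1 = "kys f1" and ?K2 = "kys f2"
  have "f1 * f2 = (\<Sum>a\<in>?K1. sng a (lkp f1 a)) * (\<Sum>b\<in>?K2. sng b (lkp f2 b))"
    using expansion_superset[of ?K1 f1] expansion_superset[of ?K2 f2] by simp
  also have "\<dots> = (\<Sum>a\<in>?K1. \<Sum>b\<in>?K2. sng (a+b) (lkp f1 a * lkp f2 b))"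
    by (simp add: sum_product mult_single)
  finally have "subst g (f1*f2) = (\<Sum>a\<in>?K1. \<Sum>b\<in>?K2. Const (lkp f1 a) * mon g a * (Const (lkp f2 b) * mon g b))"
    by (simp add: subst_sum subst_single mon_add Const_mult algebra_simps)
  also have "\<dots> = subst g f1 * subst g f2"
    by (simp add: subst_def mon_def sum_product)
  finally show ?thesis .
qed

lemma subst_Const: "subst g (Const c) = Const c"
  by (simp add: Const_def subst_single Const_one)
lemma subst_one: "subst g 1 = 1"
  using subst_Const[of g 1] by (simp add: Const_one)
lemma subst_Var: "subst g (Var v) = g v"
  by (simp add: Var_def subst_single Const_one mon_def)
lemma subst_power: "subst g (f ^ k) = subst g f ^ k"
  by (induction k) (simp_all add: subst_one subst_mult)
lemma subst_prod: "subst g (\<Prod>i\<in>I. F i) = (\<Prod>i\<in>I. subst g (F i))"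
  by (induction I rule: infinite_finite_induct) (simp_all add: subst_one subst_mult)

lemma subst_compose: "subst g (subst h f) = subst (\<lambda>v. subst g (h v)) f"
proof -
  have "subst h f = (\<Sum>m\<in>kys f. Const (lkp f m) * mon h m)" by (simp add: subst_def mon_def)
  then have "subst g (subst h f) = (\<Sum>m\<in>kys f. Const (lkp f m) * mon (\<lambda>v. subst g (h v)) m)"
    by (simp add: subst_sum subst_mult subst_Const mon_def subst_prod subst_power)
  also have "\<dots> = subst (\<lambda>v. subst g (h v)) f" by (simp add: subst_def mon_def)
  finally show ?thesis .
qed



lemma polys_in_add: "f \<in> polys_in V \<Longrightarrow> g \<in> polys_in V \<Longrightarrow> f + g \<in> polys_in V"
  unfolding polys_in_def
proof (intro CollectI ballI)
  fix m assume f: "f \<in> {f. \<forall>m\<in>kys f. kys m \<subseteq> V}" and g: "g \<in> {f. \<forall>m\<in>kys f. kys m \<subseteq> V}" and m: "m \<in> kys (f+g)"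
  have "m \<in> kys f \<union> kys g" by (rule subsetD[OF keys_add[of f g] m])
  then show "kys m \<subseteq> V" using f g by auto
qed
lemma polys_in_mult: "f \<in> polys_in V \<Longrightarrow> g \<in> polys_in V \<Longrightarrow> f * g \<in> polys_in V"
  unfolding polys_in_def
proof (intro CollectI ballI)
  fix m assume f: "f \<in> {f. \<forall>m\<in>kys f. kys m \<subseteq> V}" and g: "g \<in> {f. \<forall>m\<in>kys f. kys m \<subseteq> V}" and m: "m \<in> kys (f*g)"
  have "m \<in> {a + b | a b. a \<in> kys f \<and> b \<in> kys g}" by (rule subsetD[OF keys_mult m])
  then obtain a b where ab: "m = a + b" "a \<in> kys f" "b \<in> kys g" by blast
  have "kys m \<subseteq> kys a \<union> kys b" unfolding ab by (rule keys_add)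
  then show "kys m \<subseteq> V" using f g ab by auto
qed
lemma polys_in_uminus: "f \<in> polys_in V \<Longrightarrow> - f \<in> polys_in V"
  unfolding polys_in_def by (simp add: in_keys_iff)
lemma polys_in_Const: "Const c \<in> polys_in V"
  unfolding polys_in_def Const_def by simp
lemma polys_in_Var: "v \<in> V \<Longrightarrow> Var v \<in> polys_in V"
  unfolding polys_in_def Var_def by simp

lemma A_add: assumes "f \<in> algA p" "g \<in> algA p" shows "f + g \<in> algA p"
proof -
  from assms[unfolded algA_def] obtain a b where "a \<in> polys_in {1..2*p}" "b \<in> polys_in {1..2*p}" "f = subst (phi_gen p) a" "g = subst (phi_gen p) b"
    by blast
  then show ?thesis unfolding algA_def by (intro image_eqI[of _ _ "a + b"]) (simp_all add: subst_add polys_in_add)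
qed
lemma A_mult: assumes "f \<in> algA p" "g \<in> algA p" shows "f * g \<in> algA p"
proof -
  from assms[unfolded algA_def] obtain a b where "a \<in> polys_in {1..2*p}" "b \<in> polys_in {1..2*p}" "f = subst (phi_gen p) a" "g = subst (phi_gen p) b"
    by blast
  then show ?thesis unfolding algA_def by (intro image_eqI[of _ _ "a * b"]) (simp_all add: subst_mult polys_in_mult)
qed
lemma A_uminus: assumes "f \<in> algA p" shows "- f \<in> algA p"
proof -
  from assms[unfolded algA_def] obtain a where "a \<in> polys_in {1..2*p}" "f = subst (phi_gen p) a"
    by blast
  then show ?thesis unfolding algA_def by (intro image_eqI[of _ _ "- a"]) (simp_all add: subst_uminus polys_in_uminus)
qed
lemma A_diff: "f \<in> algA p \<Longrightarrow> g \<in> algA p \<Longrightarrow> f - g \<in> algA p"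
  using A_add[of f p "-g"] A_uminus[of g p] by simp
lemma A_Const: "Const c \<in> algA p"
  unfolding algA_def by (rule image_eqI[of _ _ "Const c"]) (simp_all add: subst_Const polys_in_Const)
lemma A_one: "1 \<in> algA p"
  using A_Const[of 1 p] by (simp add: Const_one)
lemma A_power: "f \<in> algA p \<Longrightarrow> f ^ k \<in> algA p"
  by (induction k) (simp_all add: A_one A_mult)
lemma A_prod: "(\<And>i. i \<in> I \<Longrightarrow> F i \<in> algA p) \<Longrightarrow> (\<Prod>i\<in>I. F i) \<in> algA p"
  by (induction I rule: infinite_finite_induct) (simp_all add: A_one A_mult)
lemma A_gen: "i \<in> {1..2*p} \<Longrightarrow> phi_gen p i \<in> algA p"
  unfolding algA_def by (rule image_eqI[of _ _ "Var i"]) (simp_all add: subst_Var polys_in_Var)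

lemma A_Var: assumes "1 \<le> i" "i \<le> p - 1" shows "(Var i :: 'k::comm_ring_1 mpoly) \<in> algA p"
proof -
  have "phi_gen p i = (Var i :: 'k mpoly)" using assms unfolding phi_gen_def by auto
  moreover have "phi_gen p i \<in> (algA p :: 'k mpoly set)" by (rule A_gen) (use assms in auto)
  ultimately show ?thesis by simp
qed
lemma A_s: assumes "1 \<le> p" shows "(Var p + Var 0 :: 'k::comm_ring_1 mpoly) \<in> algA p"
proof -
  have "phi_gen p p = (Var p + Var 0 :: 'k mpoly)" using assms unfolding phi_gen_def by auto
  moreover have "phi_gen p p \<in> (algA p :: 'k mpoly set)" by (rule A_gen) (use assms in auto)
  ultimately show ?thesis by simp
qed
lemma A_Var0: assumes "1 \<le> i" "i \<le> p" shows "(Var i * Var 0 :: 'k::comm_ring_1 mpoly) \<in> algA p"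
proof -
  have "phi_gen p (i + p) = (Var i * Var 0 :: 'k mpoly)" using assms unfolding phi_gen_def by auto
  moreover have "phi_gen p (i+p) \<in> (algA p :: 'k mpoly set)" by (rule A_gen) (use assms in auto)
  ultimately show ?thesis by simp
qed

lemma Var_power: "Var v ^ k = (sng (sng v k) 1 :: 'k::comm_ring_1 mpoly)"
  by (induction k) (simp_all add: Var_def mult_single single_add[symmetric])

lemma prod_sng: "(\<Prod>v\<in>K. sng (h v) (1::'k::comm_ring_1)) = sng (\<Sum>v\<in>K. h v) 1"
  by (induction K rule: infinite_finite_induct) (simp_all add: mult_single)

lemma lead_mon_sng:
  assumes "le m m" shows "lead_mon le (sng m (1::'k::comm_ring_1)) = m"
  unfolding lead_mon_def using assms by (intro the_equality) auto


lemma s_mult: "(Var p + Var 0) * sng a (1::'k::comm_ring_1) = sng (a + sng p 1) 1 + sng (a + sng 0 1) 1"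
  by (simp add: Var_def mult_single distrib_right add.commute)
lemma t_mult: "(Var p * Var 0) * sng a (1::'k::comm_ring_1) = sng (a + sng p 1 + sng 0 1) 1"
  by (simp add: Var_def mult_single add_ac)

lemma caseA_M:
  fixes i0 p :: nat
  assumes i0: "1 \<le> i0" "i0 \<le> p - 1"
  shows "(sng (sng i0 1 + sng p c + sng 0 e) 1 :: 'k::comm_ring_1 mpoly) \<in> algA p"
proof -
  define M where "M c e = (sng (sng i0 1 + sng p c + sng 0 e) 1 :: 'k mpoly)" for c e
  let ?s = "Var p + Var 0 :: 'k mpoly" and ?t = "Var p * Var 0 :: 'k mpoly"
  have p1: "1 \<le> p" using i0 by simp
  have sA: "?s \<in> algA p" using A_s[OF p1] .
  have tA: "?t \<in> algA p" using A_Var0[OF p1 order.refl] .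
  have b00: "M 0 0 \<in> algA p" using A_Var[OF i0] by (simp add: M_def Var_def)
  have "i0 \<le> p" using i0 by simp
  then have b01: "M 0 1 \<in> algA p" using A_Var0[OF i0(1), of p] by (simp add: M_def Var_def mult_single)

  have rec11: "M (c+1) (e+1) = ?t * M c e" for c e
    unfolding M_def t_mult by (intro arg_cong[where f="\<lambda>m. sng m 1"] poly_mapping_eqI) (simp add: lookup_add lookup_single when_def)
  have sM: "?s * M c e = M (c+1) e + M c (e+1)" for c e
    unfolding M_def s_mult
    by (rule arg_cong2[where f="(+)"]; intro arg_cong[where f="\<lambda>m. sng m 1"] poly_mapping_eqI; simp add: lookup_add lookup_single when_def)
  have recX: "M (c+1) e = ?s * M c e - M c (e+1)" for c e
    by (simp add: sM)
  have recY: "M c (e+1) = ?s * M c e - M (c+1) e" for c e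
    by (simp add: sM)
  have "\<forall>c e. c + e = n \<longrightarrow> M c e \<in> algA p" for n
  proof (induction n rule: less_induct)
    case (less n)
    show ?case
    proof (intro allI impI)
      fix c e assume ce: "c + e = n"
      consider "c = 0" "e = 0" | "c = 0" "e = 1" | "c = 1" "e = 0" | "c > 0" "e > 0"
        | "c \<ge> 2" "e = 0" | "c = 0" "e \<ge> 2" by linarith
      then show "M c e \<in> algA p"
      proof cases
        case 1 then show ?thesis using b00 by simp
      next
        case 2 then show ?thesis using b01 by simp
      next
        case 3 then show ?thesis using recX[of 0 0] b00 b01 sA by (simp add: A_diff A_mult)
      next
        case 4
        then obtain c' e' where "c = c'+1" "e = e'+1" by (metis Suc_eq_plus1 gr0_implies_Suc)
        moreover have "M c' e' \<in> algA p" using less.IH[of "c'+e'"] ce \<open>c = c'+1\<close> \<open>e = e'+1\<close> by auto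
        ultimately show ?thesis using rec11[of c' e'] tA by (simp add: A_mult)
      next
        case 5
        then obtain c' where c': "c = c'+2" by (metis add.commute le_Suc_ex)
        have "M c e = ?s * M (c'+1) 0 - ?t * M c' 0"
          using recX[of "c'+1" 0] rec11[of c' 0] 5 c' by (simp add: numeral_2_eq_2)
        moreover have "M (c'+1) 0 \<in> algA p" using less.IH[of "c'+1"] ce c' by auto
        moreover have "M c' 0 \<in> algA p" using less.IH[of "c'"] ce c' by auto
        ultimately show ?thesis using sA tA by (simp add: A_mult A_diff)
      next
        case 6
        then obtain e' where e': "e = e'+2" by (metis add.commute le_Suc_ex)
        have "M c e = ?s * M 0 (e'+1) - ?t * M 0 e'"
          using recY[of 0 "e'+1"] rec11[of 0 e'] 6 e' by (simp add: numeral_2_eq_2)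
        moreover have "M 0 (e'+1) \<in> algA p" using less.IH[of "e'+1"] ce e' 6 by auto
        moreover have "M 0 e' \<in> algA p" using less.IH[of "e'"] ce e' 6 by auto
        ultimately show ?thesis using sA tA by (simp add: A_mult A_diff)
      qed
    qed
  qed
  then show ?thesis unfolding M_def by blast
qed


lemma caseA_mono:
  fixes i0 p :: nat
  assumes i0: "1 \<le> i0" "i0 \<le> p - 1" and km: "kys m \<subseteq> {0..p}" and pos: "lkp m i0 > 0"
  shows "(sng m 1 :: 'k::comm_ring_1 mpoly) \<in> algA p"
proof -
  define h where "h v = lkp m v - (if v = i0 then 1 else 0)" for v
  define r where "r = (\<Sum>v\<in>{1..p-1}. sng v (h v))"
  have rA: "(sng r 1 :: 'k mpoly) \<in> algA p"
  proof -
    have "(sng r 1 :: 'k mpoly) = (\<Prod>v\<in>{1..p-1}. Var v ^ h v)"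
      unfolding r_def Var_power prod_sng ..
    also have "\<dots> \<in> algA p" by (intro A_prod A_power A_Var; simp)
    finally show ?thesis .
  qed
  have p2: "2 \<le> p" using i0 by simp
  have lr: "lkp r k = (if k \<in> {1..p-1} then h k else 0)" for k
      unfolding r_def by (simp add: lookup_sum lookup_single when_def)
  have meq: "m = (sng i0 1 + sng p (lkp m p) + sng 0 (lkp m 0)) + r"
  proof (rule poly_mapping_eqI)
    fix k
    consider "k = 0" | "k = p" | "1 \<le> k \<and> k \<le> p - 1" | "k > p" by linarith
    then show "lkp m k = lkp (sng i0 1 + sng p (lkp m p) + sng 0 (lkp m 0) + r) k"
    proof cases
      case 1 then show ?thesis using i0 p2 by (simp add: lookup_add lookup_single when_def lr)
    next
      case 2 then show ?thesis using i0 p2 by (simp add: lookup_add lookup_single when_def lr) arith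
    next
      case 3 then show ?thesis using i0 p2 pos by (simp add: lookup_add lookup_single when_def lr h_def) arith
    next
      case 4
      then have "k \<notin> kys m" using km by auto
      then show ?thesis using 4 i0 p2 by (simp add: lookup_add lookup_single when_def lr in_keys_iff) arith
    qed
  qed
  define X where "X = sng i0 1 + sng p (lkp m p) + sng 0 (lkp m 0)"
  have "(sng m 1 :: 'k mpoly) = sng (X + r) 1" unfolding X_def by (rule arg_cong[where f="\<lambda>m. sng m 1"], rule meq)
  also have "\<dots> = sng X 1 * sng r 1" by (simp add: mult_single)
  also have "\<dots> \<in> algA p" unfolding X_def by (intro A_mult caseA_M rA i0)
  finally show ?thesis .
qed



definition MS :: "nat \<Rightarrow> (nat \<Rightarrow>\<^sub>0 nat) set" where "MS p = {m. kys m \<subseteq> {0..p}}"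

lemma mo_all:
  assumes "monomial_order {0..p} le"
  shows "(\<forall>a\<in>MS p. le a a) \<and>
       (\<forall>a\<in>MS p. \<forall>b\<in>MS p. le a b \<and> le b a \<longrightarrow> a = b) \<and>
       (\<forall>a\<in>MS p. \<forall>b\<in>MS p. \<forall>c\<in>MS p. le a b \<and> le b c \<longrightarrow> le a c) \<and>
       (\<forall>a\<in>MS p. \<forall>b\<in>MS p. le a b \<or> le b a) \<and>
       (\<forall>a\<in>MS p. \<forall>b\<in>MS p. \<forall>c\<in>MS p. le a b \<longrightarrow> le (a + c) (b + c))"
  using assms unfolding monomial_order_def MS_def Let_def by (elim conjE) (intro conjI; assumption)

lemma mo_refl: "monomial_order {0..p} le \<Longrightarrow> a \<in> MS p \<Longrightarrow> le a a"
  using mo_all by blast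
lemma mo_antisym: "monomial_order {0..p} le \<Longrightarrow> a \<in> MS p \<Longrightarrow> b \<in> MS p \<Longrightarrow> le a b \<Longrightarrow> le b a \<Longrightarrow> a = b"
  using mo_all by blast
lemma mo_trans: "monomial_order {0..p} le \<Longrightarrow> a \<in> MS p \<Longrightarrow> b \<in> MS p \<Longrightarrow> c \<in> MS p \<Longrightarrow> le a b \<Longrightarrow> le b c \<Longrightarrow> le a c"
  using mo_all by blast
lemma mo_total: "monomial_order {0..p} le \<Longrightarrow> a \<in> MS p \<Longrightarrow> b \<in> MS p \<Longrightarrow> le a b \<or> le b a"
  using mo_all by blast
lemma mo_compat: "monomial_order {0..p} le \<Longrightarrow> a \<in> MS p \<Longrightarrow> b \<in> MS p \<Longrightarrow> c \<in> MS p \<Longrightarrow> le a b \<Longrightarrow> le (a + c) (b + c)"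
  using mo_all by blast

lemma MS_add: assumes "a \<in> MS p" "b \<in> MS p" shows "a + b \<in> MS p"
proof -
  have "kys (a + b) \<subseteq> kys a \<union> kys b" by (rule keys_add)
  then show ?thesis using assms unfolding MS_def by auto
qed
lemma MS_sng: "v \<le> p \<Longrightarrow> sng v k \<in> MS p"
  unfolding MS_def by auto

lemma y_le_x:
  assumes mo: "monomial_order {0..p} le" and yx: "le (sng 0 1) (sng p 1)"
  shows "le (sng 0 k) (sng p k)"
proof (induction k)
  case 0 show ?case using mo_refl[OF mo, of 0] by (simp add: MS_def)
next
  case (Suc k)
  have ms: "sng 0 k \<in> MS p" "sng p k \<in> MS p" "sng 0 1 \<in> MS p" "sng p 1 \<in> MS p" by (simp_all add: MS_sng)
  have a: "le (sng 0 k + sng 0 1) (sng p k + sng 0 1)"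
    by (rule mo_compat[OF mo ms(1,2,3) Suc])
  have b: "le (sng 0 1 + sng p k) (sng p 1 + sng p k)"
    by (rule mo_compat[OF mo ms(3,4,2) yx])
  have "le (sng 0 k + sng 0 1) (sng p k + sng p 1)"
    using mo_trans[OF mo _ _ _ a] b MS_add ms by (metis add.commute)
  then show ?case by (simp add: single_add[symmetric])
qed
lemma finite_max:
  assumes mo: "monomial_order {0..p} le"
  shows "finite S \<Longrightarrow> S \<noteq> {} \<Longrightarrow> S \<subseteq> MS p \<Longrightarrow> \<exists>x\<in>S. \<forall>y\<in>S. le y x"
proof (induction S rule: finite_ne_induct)
  case (singleton x) then show ?case using mo_refl[OF mo] by auto
next
  case (insert x F)
  then obtain z where z: "z \<in> F" "\<forall>y\<in>F. le y z" by auto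
  have xz: "x \<in> MS p" "z \<in> MS p" using insert z by auto
  show ?case
  proof (cases "le x z")
    case True then show ?thesis using z by auto
  next
    case False
    then have "le z x" using mo_total[OF mo xz] by auto
    then have "\<forall>y\<in>F. le y x" using z insert mo_trans[OF mo, of _ z x] xz by blast
    then show ?thesis using mo_refl[OF mo xz(1)] by auto
  qed
qed

lemma lead_mon_props:
  assumes mo: "monomial_order {0..p} le" and f: "f \<noteq> 0" "kys f \<subseteq> MS p"
  shows "lead_mon le f \<in> kys f \<and> (\<forall>m'\<in>kys f. le m' (lead_mon le f))"
proof -
  obtain x where x: "x \<in> kys f" "\<forall>y\<in>kys f. le y x"
    using finite_max[OF mo, of "kys f"] f by auto
  have "lead_mon le f = x" unfolding lead_mon_def
  proof (rule the_equality)
    fix m assume "m \<in> kys f \<and> (\<forall>m'\<in>kys f. le m' m)"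
    then show "m = x" using x f mo_antisym[OF mo, of m x] by blast
  qed (use x in blast)
  then show ?thesis using x by simp
qed



definition sw :: "nat \<Rightarrow> nat \<Rightarrow> nat" where "sw p v = (if v = 0 then p else if v = p then 0 else v)"
definition swapn :: "nat \<Rightarrow> (nat \<Rightarrow>\<^sub>0 nat) \<Rightarrow> (nat \<Rightarrow>\<^sub>0 nat)" where
  "swapn p n = (\<Sum>v\<in>kys n. sng (sw p v) (lkp n v))"

lemma sw_eq: "sw p v = w \<longleftrightarrow> v = sw p w"
  by (auto simp: sw_def)

lemma lk_swapn: "lkp (swapn p n) w = lkp n (sw p w)"
proof -
  have "lkp (swapn p n) w = (\<Sum>v\<in>kys n. if v = sw p w then lkp n v else 0)"
    unfolding swapn_def by (simp add: lookup_sum lookup_single when_def sw_eq)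
  also have "\<dots> = lkp n (sw p w)" by (simp add: in_keys_iff)
  finally show ?thesis .
qed

lemma sw_sw [simp]: "sw p (sw p v) = v"
  by (simp add: sw_def)

lemma swapn_swapn: "swapn p (swapn p n) = n"
  by (rule poly_mapping_eqI) (simp add: lk_swapn)

lemma mon_kill:
  fixes Z :: "nat set" and \<sigma> :: "nat \<Rightarrow> nat"
  defines "g \<equiv> (\<lambda>v. if v \<in> Z then 0 else Var (\<sigma> v)) :: nat \<Rightarrow> 'k::comm_ring_1 mpoly"
  shows "mon g n = (if kys n \<inter> Z = {} then sng (\<Sum>v\<in>kys n. sng (\<sigma> v) (lkp n v)) 1 else 0)"
proof (cases "kys n \<inter> Z = {}")
  case True
  then have "mon g n = (\<Prod>v\<in>kys n. sng (sng (\<sigma> v) (lkp n v)) (1::'k))"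
    unfolding mon_def g_def by (intro prod.cong) (auto simp: Var_power)
  then show ?thesis using True by (simp add: prod_sng)
next
  case False
  then obtain v where v: "v \<in> kys n" "v \<in> Z" by auto
  then have "g v ^ lkp n v = 0" unfolding g_def by (simp add: in_keys_iff power_0_left)
  then have "mon g n = 0" unfolding mon_def using v by (intro prod_zero) auto
  then show ?thesis using False by simp
qed

lemma lookup_subst: "lkp (subst g f) m = (\<Sum>n\<in>kys f. lkp f n * lkp (mon g n) m)"
  unfolding subst_def mon_def[symmetric] by (simp add: lookup_sum lookup_Const_mult)

definition g0 :: "nat \<Rightarrow> nat \<Rightarrow> 'k::comm_ring_1 mpoly" where
  "g0 p = (\<lambda>v. if v \<in> {1..p-1} then 0 else Var (id v))"
definition gs :: "nat \<Rightarrow> nat \<Rightarrow> 'k::comm_ring_1 mpoly" where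
  "gs p = (\<lambda>v. if v \<in> {1..p-1} then 0 else Var (sw p v))"

lemma lookup_g0:
  assumes "kys m \<inter> {1..p-1} = {}"
  shows "lkp (subst (g0 p) f) m = lkp (f :: 'k::comm_ring_1 mpoly) m"
proof -
  have "lkp (mon (g0 p) n) m = (if kys n \<inter> {1..p-1} = {} \<and> n = m then (1::'k) else 0)" for n
  proof -
    have e: "(\<Sum>v\<in>kys n. sng (id v) (lkp n v)) = n"
      using expansion_superset[of "kys n" n] by simp
    have "mon (g0 p) n = (if kys n \<inter> {1..p-1} = {} then sng n 1 else (0::'k mpoly))"
      by (simp only: g0_def mon_kill e)
    then show ?thesis by (auto simp add: lookup_single when_def)
  qed
  then have "lkp (subst (g0 p) f) m = (\<Sum>n\<in>kys f. if n = m then lkp f n else 0)"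
    unfolding lookup_subst using assms by (intro sum.cong) auto
  also have "\<dots> = lkp f m" by (simp add: in_keys_iff)
  finally show ?thesis .
qed

lemma lookup_gs:
  assumes "kys m \<inter> {1..p-1} = {}"
  shows "lkp (subst (gs p) f) m = lkp (f :: 'k::comm_ring_1 mpoly) (swapn p m)"
proof -
  have iff: "(kys n \<inter> {1..p-1} = {} \<and> swapn p n = m) \<longleftrightarrow> n = swapn p m" for n
  proof
    assume "kys n \<inter> {1..p-1} = {} \<and> swapn p n = m"
    then show "n = swapn p m" using swapn_swapn[of p n] by simp
  next
    assume n: "n = swapn p m"
    have "kys n \<inter> {1..p-1} = {}"
    proof (rule ccontr)
      assume "kys n \<inter> {1..p-1} \<noteq> {}"
      then obtain w where w: "w \<in> kys n" "w \<in> {1..p-1}" by blast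
      then have "sw p w = w" by (auto simp: sw_def)
      then have "lkp n w = lkp m w" unfolding n lk_swapn by simp
      then show False using w assms by (auto simp: in_keys_iff)
    qed
    then show "kys n \<inter> {1..p-1} = {} \<and> swapn p n = m" using n swapn_swapn by simp
  qed
  have "lkp (mon (gs p) n) m = (if n = swapn p m then (1::'k) else 0)" for n
    unfolding gs_def mon_kill swapn_def[symmetric] using iff[of n]
    by (auto simp: lookup_single when_def)
  then have "lkp (subst (gs p) f) m = (\<Sum>n\<in>kys f. if n = swapn p m then lkp f n else 0)"
    unfolding lookup_subst by (intro sum.cong) auto
  also have "\<dots> = lkp f (swapn p m)" by (simp add: in_keys_iff)
  finally show ?thesis .
qed

lemma g0_gs_phi:
  assumes "1 \<le> p"
  shows "subst (g0 p) (phi_gen p v) = (subst (gs p) (phi_gen p v) :: 'k::comm_ring_1 mpoly)"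
proof -
  have np: "\<not> (p \<le> p - 1)" using assms by simp
  consider "1 \<le> v \<and> v \<le> p - 1" | "v = p" | "p + 1 \<le> v \<and> v \<le> 2 * p \<and> v - p \<le> p - 1"
    | "v = 2 * p" | "\<not> (1 \<le> v \<and> v \<le> 2 * p)" by linarith
  then show ?thesis
  proof cases
    case 1 then show ?thesis by (simp add: phi_gen_def subst_Var g0_def gs_def)
  next
    case 2 then show ?thesis using assms np by (simp add: phi_gen_def subst_Var subst_add g0_def gs_def sw_def add.commute)
  next
    case 3
    then have "1 \<le> v - p" "v - p \<le> p - 1" by auto
    then show ?thesis using assms 3 by (simp add: phi_gen_def subst_Var subst_mult g0_def gs_def sw_def)
  next
    case 4 then show ?thesis using assms np by (simp add: phi_gen_def subst_Var subst_mult g0_def gs_def sw_def mult.commute)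
  next
    case 5 then show ?thesis using assms by (auto simp add: phi_gen_def)
  qed
qed

lemma sym_lookup:
  assumes p: "1 \<le> p" and f: "f \<in> algA p" and m: "kys m \<inter> {1..p-1} = {}"
  shows "lkp (f :: 'k::comm_ring_1 mpoly) m = lkp f (swapn p m)"
proof -
  obtain h where h: "f = subst (phi_gen p) h" using f unfolding algA_def by blast
  have "subst (g0 p) f = subst (gs p) f"
    unfolding h subst_compose by (rule arg_cong[where f="\<lambda>g. subst g h"], rule ext, rule g0_gs_phi[OF p])
  then show ?thesis using lookup_g0[OF m, of f] lookup_gs[OF m, of f] by simp
qed



lemma polys_in_sum: "(\<And>i. i \<in> I \<Longrightarrow> F i \<in> polys_in V) \<Longrightarrow> (\<Sum>i\<in>I. F i) \<in> polys_in V"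
  by (induction I rule: infinite_finite_induct)
     (simp_all add: polys_in_add, (metis Const_zero polys_in_Const)+)
lemma polys_in_prod: "(\<And>i. i \<in> I \<Longrightarrow> F i \<in> polys_in V) \<Longrightarrow> (\<Prod>i\<in>I. F i) \<in> polys_in V"
  by (induction I rule: infinite_finite_induct)
     (simp_all add: polys_in_mult, (metis Const_one polys_in_Const)+)
lemma polys_in_power: "f \<in> polys_in V \<Longrightarrow> f ^ k \<in> polys_in V"
  by (induction k) (simp_all add: polys_in_mult, metis Const_one polys_in_Const)

lemma phi_polys: "phi_gen p v \<in> polys_in {0..p}"
  unfolding phi_gen_def
  by (auto intro!: polys_in_add polys_in_mult polys_in_Var simp: Const_zero[symmetric] polys_in_Const)

lemma A_polys: assumes "f \<in> algA p" shows "kys f \<subseteq> MS p"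
proof -
  obtain h where h: "f = subst (phi_gen p) h" using assms unfolding algA_def by blast
  have "f \<in> polys_in {0..p}" unfolding h subst_def
    by (intro polys_in_sum polys_in_mult polys_in_Const polys_in_prod polys_in_power phi_polys)
  then show ?thesis unfolding polys_in_def MS_def by auto
qed

lemma keys_two:
  assumes "a \<noteq> b" shows "kys (sng a (1::'k::field) + sng b 1) = {a, b}"
  using assms by (auto simp: in_keys_iff lookup_add lookup_single when_def split: if_splits)

lemma P_in_A:
  assumes p: "1 \<le> p"
  shows "(sng (sng p k) 1 + sng (sng 0 k) 1 :: 'k::comm_ring_1 mpoly) \<in> algA p"
proof -
  define P where "P k = (sng (sng p k) 1 + sng (sng 0 k) 1 :: 'k mpoly)" for k
  let ?s = "Var p + Var 0 :: 'k mpoly" and ?t = "Var p * Var 0 :: 'k mpoly"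
  have sA: "?s \<in> algA p" using A_s[OF p] .
  have tA: "?t \<in> algA p" using A_Var0[OF p order.refl] .
  have e1: "sng p (k+1) + sng p 1 = sng p (k+2)" for k :: nat
    by (rule poly_mapping_eqI) (simp add: lookup_add lookup_single when_def)
  have e2: "sng p (k+1) + sng 0 1 = sng p k + sng p 1 + sng 0 1" for k :: nat
    by (rule poly_mapping_eqI) (simp add: lookup_add lookup_single when_def)
  have e3: "sng 0 (k+1) + sng p 1 = sng 0 k + sng p 1 + sng 0 1" for k :: nat
    by (rule poly_mapping_eqI) (simp add: lookup_add lookup_single when_def)
  have e4: "sng 0 (k+1) + sng 0 1 = sng (0::nat) (k+2)" for k :: nat
    by (rule poly_mapping_eqI) (simp add: lookup_add lookup_single when_def)
  have rec: "P (k+2) = ?s * P (k+1) - ?t * P k" for k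
  proof -
    have "?s * P (k+1) = P (k+2) + (sng (sng p k + sng p 1 + sng 0 1) 1 + sng (sng 0 k + sng p 1 + sng 0 1) 1)"
      unfolding P_def distrib_left s_mult e1 e2 e3 e4 by (simp add: algebra_simps)
    moreover have "?t * P k = sng (sng p k + sng p 1 + sng 0 1) 1 + sng (sng 0 k + sng p 1 + sng 0 1) 1"
      unfolding P_def distrib_left t_mult ..
    ultimately show ?thesis by simp
  qed
  have "P k \<in> algA p \<and> P (k+1) \<in> algA p" for k
  proof (induction k)
    case 0
    have "P 0 = 1 + 1" unfolding P_def by simp
    moreover have "P 1 = ?s" unfolding P_def by (simp add: Var_def)
    ultimately show ?case using A_add[OF A_one A_one] sA by simp
  next
    case (Suc k)
    then show ?case using rec[of k] sA tA by (simp add: A_diff A_mult)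
  qed
  then show ?thesis unfolding P_def by blast
qed


lemma t_power: "(Var p * Var 0) ^ e = (sng (sng p e + sng 0 e) 1 :: 'k::comm_ring_1 mpoly)"
  by (simp add: power_mult_distrib Var_power mult_single)

lemma caseB_lead:
  assumes mo: "monomial_order {0..p} le" and yx: "le (sng 0 1) (sng p 1)" and p: "1 \<le> p"
    and ec: "e \<le> c"
  shows "\<exists>f \<in> (algA p :: 'k::field mpoly set). f \<noteq> 0 \<and> lead_mon le f = sng p c + sng 0 e"
proof -
  let ?t = "Var p * Var 0 :: 'k mpoly"
  have tA: "?t \<in> algA p" using A_Var0[OF p order.refl] .
  define mA where "mA = sng p c + sng 0 e"
  define mB where "mB = sng p e + sng 0 c"
  have msA: "mA \<in> MS p" "mB \<in> MS p" unfolding mA_def mB_def by (simp_all add: MS_add MS_sng)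
  show ?thesis
  proof (cases "c = e")
    case True
    have "?t ^ e \<in> algA p" by (rule A_power[OF tA])
    moreover have "?t ^ e = sng mA 1" unfolding t_power mA_def True ..
    moreover have "lead_mon le (sng mA (1::'k)) = mA" by (rule lead_mon_sng[of le mA, OF mo_refl[OF mo msA(1)]])
    moreover have "sng mA (1::'k) \<noteq> 0"
    proof
      assume "sng mA (1::'k) = 0"
      then have "lkp (sng mA (1::'k)) mA = 0" by simp
      then show False by simp
    qed
    ultimately show ?thesis unfolding mA_def by (intro bexI[of _ "?t ^ e"]) simp_all
  next
    case False
    then have ce: "e < c" using ec by simp
    define k where "k = c - e"
    define f where "f = ?t ^ e * (sng (sng p k) 1 + sng (sng 0 k) 1)"
    have fA: "f \<in> algA p" unfolding f_def by (intro A_mult A_power tA P_in_A p)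
    have eA: "sng p e + sng 0 e + sng p k = mA" unfolding mA_def k_def using ce
      by (intro poly_mapping_eqI) (simp add: lookup_add lookup_single when_def)
    have eB: "sng p e + sng 0 e + sng 0 k = mB" unfolding mB_def k_def using ce
      by (intro poly_mapping_eqI) (simp add: lookup_add lookup_single when_def)
    have feq: "f = sng mA 1 + sng mB 1"
      unfolding f_def t_power distrib_left mult_single eA[symmetric] eB[symmetric] by simp
    have neq: "mA \<noteq> mB"
    proof
      assume "mA = mB"
      then have "lkp mA p = lkp mB p" by simp
      then show False unfolding mA_def mB_def using ce p by (simp add: lookup_add lookup_single when_def)
    qed
    have keys: "kys f = {mA, mB}" unfolding feq by (rule keys_two[OF neq])
    have BA: "le mB mA"
    proof -
      have "le (sng 0 k + (sng p e + sng 0 e)) (sng p k + (sng p e + sng 0 e))"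
        by (rule mo_compat[OF mo _ _ _ y_le_x[OF mo yx]]) (simp_all add: MS_add MS_sng)
      then show ?thesis unfolding eA[symmetric] eB[symmetric] by (simp add: add.commute)
    qed
    have "lead_mon le f = mA" unfolding lead_mon_def keys
    proof (rule the_equality)
      show "mA \<in> {mA, mB} \<and> (\<forall>m'\<in>{mA, mB}. le m' mA)" using BA mo_refl[OF mo msA(1)] by simp
    next
      fix m assume "m \<in> {mA, mB} \<and> (\<forall>m'\<in>{mA, mB}. le m' m)"
      then show "m = mA" using mo_antisym[OF mo msA(2,1) BA] by auto
    qed
    moreover have "f \<noteq> 0" using keys by auto
    ultimately show ?thesis using fA unfolding mA_def by blast
  qed
qed

lemma caseB_sub:
  assumes mo: "monomial_order {0..p} le" and yx: "le (sng 0 1) (sng p 1)" and p: "1 \<le> p"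
    and f: "(f :: 'k::comm_ring_1 mpoly) \<in> algA p" "f \<noteq> 0"
    and m: "m = lead_mon le f" and z: "\<forall>i\<in>{1..p-1}. lkp m i = 0"
  shows "lkp m 0 \<le> lkp m p"
proof (rule ccontr)
  assume "\<not> lkp m 0 \<le> lkp m p"
  then have ab: "lkp m p < lkp m 0" by simp
  define a where "a = lkp m p"
  define b where "b = lkp m 0"
  have kf: "kys f \<subseteq> MS p" by (rule A_polys[OF f(1)])
  have lp: "m \<in> kys f" "\<forall>m'\<in>kys f. le m' m" using lead_mon_props[OF mo f(2) kf] m by auto
  have mMS: "m \<in> MS p" using lp kf by auto
  have mz: "kys m \<inter> {1..p-1} = {}" using z by (auto simp: in_keys_iff)
  have "lkp f (swapn p m) = lkp f m" using sym_lookup[OF p f(1) mz] by simp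
  then have sk: "swapn p m \<in> kys f" using lp by (simp add: in_keys_iff)
  then have sMS: "swapn p m \<in> MS p" using kf by auto
  have le1: "le (swapn p m) m" using lp sk by auto
  have big: "lkp m w = 0" if "w > p" for w
    using mMS that by (auto simp: MS_def in_keys_iff)
  have em: "m = (sng p a + sng 0 a) + sng 0 (b - a)"
  proof (rule poly_mapping_eqI)
    fix w
    show "lkp m w = lkp (sng p a + sng 0 a + sng 0 (b - a)) w"
      using z big[of w] ab p unfolding a_def b_def
      by (cases "w = 0"; cases "w = p"; cases "w > p") (auto simp: lookup_add lookup_single when_def)
  qed
  have es: "swapn p m = (sng p a + sng 0 a) + sng p (b - a)"
  proof (rule poly_mapping_eqI)
    fix w
    show "lkp (swapn p m) w = lkp (sng p a + sng 0 a + sng p (b - a)) w"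
      using z big[of w] ab p unfolding a_def b_def lk_swapn
      by (cases "w = 0"; cases "w = p"; cases "w > p") (auto simp: lookup_add lookup_single when_def sw_def)
  qed
  have "le (sng 0 (b - a) + (sng p a + sng 0 a)) (sng p (b - a) + (sng p a + sng 0 a))"
    by (rule mo_compat[OF mo _ _ _ y_le_x[OF mo yx]]) (simp_all add: MS_add MS_sng)
  then have le2: "le m (swapn p m)" by (subst em, subst es) (simp add: add.commute)
  have "m = swapn p m" by (rule mo_antisym[OF mo mMS sMS le2 le1])
  then have "lkp m p = lkp (swapn p m) p" by simp
  then show False using ab p unfolding lk_swapn by (simp add: sw_def)
qed



lemma indep_monos: "\<not> module.dependent (scale :: 'k::field \<Rightarrow> 'k mpoly \<Rightarrow> 'k mpoly) ((\<lambda>m. sng m (1::'k)) ` T)"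
proof -
  interpret vs: vector_space "scale :: 'k \<Rightarrow> 'k mpoly \<Rightarrow> 'k mpoly" by (rule vs_scale)
  show ?thesis unfolding vs.dependent_explicit
  proof clarify
    fix t u v
    assume t: "finite t" "t \<subseteq> (\<lambda>m. sng m (1::'k)) ` T" and s: "(\<Sum>v\<in>t. scale (u v) v) = 0"
      and v: "v \<in> t" and uv: "u v \<noteq> 0"
    obtain mv where mv: "v = sng mv 1" using t v by auto
    have "0 = lkp (\<Sum>w\<in>t. scale (u w) w) mv" using s by simp
    also have "\<dots> = (\<Sum>w\<in>t. u w * lkp w mv)" by (simp add: lookup_sum scale_def lookup_Const_mult)
    also have "\<dots> = (\<Sum>w\<in>t. if w = v then u w else 0)"
    proof (rule sum.cong)
      fix w assume "w \<in> t"
      then obtain mw where mw: "w = sng mw 1" using t by auto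
      have "w = v \<longleftrightarrow> mw = mv"
      proof
        assume "w = v" then have "lkp w mw = lkp v mw" by simp
        then show "mw = mv" unfolding mw mv by (simp add: lookup_single when_def split: if_splits)
      qed (simp add: mw mv)
      then show "u w * lkp w mv = (if w = v then u w else 0)" unfolding mw by (simp add: lookup_single when_def)
    qed simp
    also have "\<dots> = u v" using t v by simp
    finally show False using uv by simp
  qed
qed

lemma sng_inj: "inj (\<lambda>m. sng m (1::'k::field))"
proof (rule injI)
  fix a b assume "sng a (1::'k) = sng b 1"
  then have "lkp (sng a (1::'k)) a = lkp (sng b 1) a" by simp
  then show "a = b" by (simp add: lookup_single when_def split: if_splits)
qed

lemma mdeg_iff:
  assumes "1 \<le> p"
  shows "(\<forall>i\<in>{1..p}. mdeg p m i = d i) \<longleftrightarrow> (\<forall>i\<in>{1..p-1}. lkp m i = d i) \<and> lkp m p + lkp m 0 = d p"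
proof
  assume H: "\<forall>i\<in>{1..p}. mdeg p m i = d i"
  have "lkp m i = d i" if "i \<in> {1..p-1}" for i
  proof -
    have "i \<noteq> p" "i \<in> {1..p}" using that by auto
    then have "mdeg p m i = d i" using H by blast
    then show ?thesis using \<open>i \<noteq> p\<close> by (simp add: mdeg_def)
  qed
  moreover have "lkp m p + lkp m 0 = d p" using H[rule_format, of p] assms by (simp add: mdeg_def)
  ultimately show "(\<forall>i\<in>{1..p-1}. lkp m i = d i) \<and> lkp m p + lkp m 0 = d p" by blast
next
  assume H: "(\<forall>i\<in>{1..p-1}. lkp m i = d i) \<and> lkp m p + lkp m 0 = d p"
  show "\<forall>i\<in>{1..p}. mdeg p m i = d i"
  proof
    fix i assume i: "i \<in> {1..p}"
    show "mdeg p m i = d i"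
    proof (cases "i = p")
      case True then show ?thesis using H by (simp add: mdeg_def)
    next
      case False then show ?thesis using H i by (auto simp: mdeg_def)
    qed
  qed
qed

lemma keys_sub_iff: "kys (m :: nat \<Rightarrow>\<^sub>0 nat) \<subseteq> {0..p} \<longleftrightarrow> (\<forall>w. p < w \<longrightarrow> lkp m w = 0)"
  unfolding subset_iff in_keys_iff atLeastAtMost_iff
  by (metis le0 not_le)

theorem corollary6p4:
  fixes le :: "(nat \<Rightarrow>\<^sub>0 nat) \<Rightarrow> (nat \<Rightarrow>\<^sub>0 nat) \<Rightarrow> bool"
    and p :: nat and d :: "nat \<Rightarrow> nat"
  assumes "p \<ge> 3"
    and "monomial_order {0..p} le"
    and "le (Poly_Mapping.single 0 1) (Poly_Mapping.single p 1)"
  shows "vector_space.dim (scale :: 'k::field \<Rightarrow> 'k mpoly \<Rightarrow> 'k mpoly)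
            (init_part_mons le (algA p :: 'k mpoly set) p d) =
         (if \<exists>i\<in>{1..p-1}. d i > 0 then d p + 1 else 1 + d p div 2)"
proof -
  note mo = assms(2) and yx = assms(3)
  have p1: "1 \<le> p" using assms(1) by simp
  interpret vs: vector_space "scale :: 'k \<Rightarrow> 'k mpoly \<Rightarrow> 'k mpoly" by (rule vs_scale)
  define T where "T = {m. m \<in> init_mons le (algA p :: 'k mpoly set) \<and> kys m \<subseteq> {0..p} \<and> (\<forall>i\<in>{1..p}. mdeg p m i = d i)}"
  have S: "init_part_mons le (algA p :: 'k mpoly set) p d = (\<lambda>m. sng m (1::'k)) ` T"
    unfolding init_part_mons_def T_def by auto
  have dimT: "vs.dim (init_part_mons le (algA p :: 'k mpoly set) p d) = card T"
    unfolding S vs.dim_eq_card_independent[OF indep_monos]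
    by (rule card_image) (rule inj_on_subset[OF sng_inj subset_UNIV])
  show ?thesis
  proof (cases "\<exists>i\<in>{1..p-1}. d i > 0")
    case True
    then obtain i0 where i0: "i0 \<in> {1..p-1}" "d i0 > 0" by blast
    define mA where "mA e = (\<Sum>v\<in>{1..p-1}. sng v (d v)) + sng p (d p - e) + sng 0 e" for e
    have lkA: "lkp (mA e) w = (if w = 0 then e else if w = p then d p - e else if w \<in> {1..p-1} then d w else 0)" for e w
      unfolding mA_def using p1 by (auto simp: lookup_add lookup_single when_def lookup_sum)
    have TA: "T = mA ` {0..d p}"
    proof
      show "T \<subseteq> mA ` {0..d p}"
      proof
        fix m assume "m \<in> T"
        then have m: "kys m \<subseteq> {0..p}" "\<forall>i\<in>{1..p-1}. lkp m i = d i" "lkp m p + lkp m 0 = d p"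
          unfolding T_def mdeg_iff[OF p1] by auto
        have "m = mA (lkp m 0)"
        proof (rule poly_mapping_eqI)
          fix w show "lkp m w = lkp (mA (lkp m 0)) w"
            using m unfolding lkA keys_sub_iff by (cases "w = 0"; cases "w = p"; cases "p < w") auto
        qed
        moreover have "lkp m 0 \<in> {0..d p}" using m by auto
        ultimately show "m \<in> mA ` {0..d p}" by blast
      qed
    next
      show "mA ` {0..d p} \<subseteq> T"
      proof
        fix m assume "m \<in> mA ` {0..d p}"
        then obtain e where e: "e \<le> d p" "m = mA e" by auto
        have ks: "kys m \<subseteq> {0..p}" unfolding keys_sub_iff e lkA by auto
        have md: "\<forall>i\<in>{1..p}. mdeg p m i = d i" unfolding mdeg_iff[OF p1] e lkA using e p1 by auto
        have fA: "(sng m 1 :: 'k mpoly) \<in> algA p"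
          by (rule caseA_mono[of i0 p]) (use i0 ks in \<open>auto simp: e lkA\<close>)
        have "sng m (1::'k) \<noteq> 0"
        proof
          assume "sng m (1::'k) = 0"
          then have "lkp (sng m (1::'k)) m = 0" by simp
          then show False by simp
        qed
        moreover have "lead_mon le (sng m (1::'k)) = m"
          by (rule lead_mon_sng[of le m, OF mo_refl[OF mo]]) (simp add: MS_def ks)
        ultimately have "m \<in> init_mons le (algA p :: 'k mpoly set)"
          unfolding init_mons_def using fA by force
        then show "m \<in> T" unfolding T_def using ks md by blast
      qed
    qed
    have "inj_on mA {0..d p}"
    proof (rule inj_onI)
      fix a b assume "mA a = mA b"
      then have "lkp (mA a) 0 = lkp (mA b) 0" by simp
      then show "a = b" unfolding lkA by simp
    qed
    then have "card T = d p + 1" unfolding TA by (simp add: card_image)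
    then show ?thesis using True dimT by simp
  next
    case False
    then have dz: "\<forall>i\<in>{1..p-1}. d i = 0" by auto
    define mB where "mB e = sng p (d p - e) + sng 0 e" for e
    have lkB: "lkp (mB e) w = (if w = 0 then e else if w = p then d p - e else 0)" for e w
      unfolding mB_def using p1 by (auto simp: lookup_add lookup_single when_def)
    have TB: "T = mB ` {0..d p div 2}"
    proof
      show "T \<subseteq> mB ` {0..d p div 2}"
      proof
        fix m assume "m \<in> T"
        then have m: "kys m \<subseteq> {0..p}" "\<forall>i\<in>{1..p-1}. lkp m i = 0" "lkp m p + lkp m 0 = d p"
          and mi: "m \<in> init_mons le (algA p :: 'k mpoly set)"
          unfolding T_def mdeg_iff[OF p1] using dz by auto
        obtain f where f: "f \<in> (algA p :: 'k mpoly set)" "f \<noteq> 0" "m = lead_mon le f"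
          using mi unfolding init_mons_def by blast
        have "lkp m 0 \<le> lkp m p" by (rule caseB_sub[OF mo yx p1 f m(2)])
        then have le2: "lkp m 0 \<le> d p div 2" using m(3) by linarith
        have "m = mB (lkp m 0)"
        proof (rule poly_mapping_eqI)
          fix w show "lkp m w = lkp (mB (lkp m 0)) w"
            using m unfolding lkB keys_sub_iff by (cases "w = 0"; cases "w = p"; cases "p < w") auto
        qed
        then show "m \<in> mB ` {0..d p div 2}" using le2 by auto
      qed
    next
      show "mB ` {0..d p div 2} \<subseteq> T"
      proof
        fix m assume "m \<in> mB ` {0..d p div 2}"
        then obtain e where e: "e \<le> d p div 2" "m = mB e" by auto
        have ks: "kys m \<subseteq> {0..p}" unfolding keys_sub_iff e lkB by auto
        have md: "\<forall>i\<in>{1..p}. mdeg p m i = d i" unfolding mdeg_iff[OF p1] e lkB using e p1 dz by auto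
        have "e \<le> d p - e" using e by linarith
        from caseB_lead[OF mo yx p1 this] obtain f where
          f: "f \<in> (algA p :: 'k mpoly set)" "f \<noteq> 0" "lead_mon le f = mB e"
          unfolding mB_def by blast
        then have "m \<in> init_mons le (algA p :: 'k mpoly set)"
          unfolding init_mons_def e by force
        then show "m \<in> T" unfolding T_def using ks md by blast
      qed
    qed
    have "inj_on mB {0..d p div 2}"
    proof (rule inj_onI)
      fix a b assume "mB a = mB b"
      then have "lkp (mB a) 0 = lkp (mB b) 0" by simp
      then show "a = b" unfolding lkB by simp
    qed
    then have "card T = d p div 2 + 1" unfolding TB by (simp add: card_image)
    then show ?thesis using False dimT by simp
  qed
qed

end
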